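(* Let $G$ be a graph not containing $K_{s,s}$. If $G$ contains a rich independent set of size $a$, then $G$ contains $H$ as an induced subgraph.
   Context: Let $H=(A,B;E)$ be a fixed bipartite graph with vertex classes $A$ and $B$ such that every vertex in $B$ has degree at most $k$ in $H$, and write $a=|A|$, $b=|B|$. Let $s$ be a positive integer. A set of vertices $S\subset V(G)$ is called rich if for every subset $T\subseteq S$ with $|T|\leq k$, there are at least $(4bs)^{b}$ vertices $v\in V(G)\setminus S$ with $N(v)\cap S=T$, i.e. which are adjacent to all vertices of $T$ and non-adjacent to all vertices of $S\setminus T$. *)

theory Defs
  imports Main
begin

definition graph :: "'v set \<Rightarrow> ('v \<Rightarrow> 'v \<Rightarrow> bool) \<Rightarrow> bool" where
  "graph V adj \<longleftrightarrow> finite V \<and> (\<forall>x y. adj x y \<longrightarrow> x \<in> V \<and> y \<in> V) \<and>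
     (\<forall>x y. adj x y \<longrightarrow> adj y x) \<and> (\<forall>x. \<not> adj x x)"

definition nbhd :: "'v set \<Rightarrow> ('v \<Rightarrow> 'v \<Rightarrow> bool) \<Rightarrow> 'v \<Rightarrow> 'v set" where
  "nbhd V adj v = {u \<in> V. adj v u}"

definition contains_Kss :: "'v set \<Rightarrow> ('v \<Rightarrow> 'v \<Rightarrow> bool) \<Rightarrow> nat \<Rightarrow> bool" where
  "contains_Kss V adj s \<longleftrightarrow> (\<exists>X Y. X \<subseteq> V \<and> Y \<subseteq> V \<and> X \<inter> Y = {} \<and>
     card X = s \<and> card Y = s \<and> (\<forall>x\<in>X. \<forall>y\<in>Y. adj x y))"

definition independent :: "('v \<Rightarrow> 'v \<Rightarrow> bool) \<Rightarrow> 'v set \<Rightarrow> bool" where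
  "independent adj S \<longleftrightarrow> (\<forall>x\<in>S. \<forall>y\<in>S. \<not> adj x y)"

definition rich :: "'v set \<Rightarrow> ('v \<Rightarrow> 'v \<Rightarrow> bool) \<Rightarrow> nat \<Rightarrow> nat \<Rightarrow> nat \<Rightarrow> 'v set \<Rightarrow> bool" where
  "rich V adj k b s S \<longleftrightarrow> S \<subseteq> V \<and>
     (\<forall>T. T \<subseteq> S \<and> card T \<le> k \<longrightarrow>
        card {v \<in> V - S. nbhd V adj v \<inter> S = T} \<ge> (4 * b * s) ^ b)"

definition induced_copy :: "'v set \<Rightarrow> ('v \<Rightarrow> 'v \<Rightarrow> bool) \<Rightarrow> 'h set \<Rightarrow> ('h \<times> 'h) set \<Rightarrow> bool" where
  "induced_copy V adj W E \<longleftrightarrow> (\<exists>f. inj_on f W \<and> f ` W \<subseteq> V \<and>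
     (\<forall>x\<in>W. \<forall>y\<in>W. adj (f x) (f y) \<longleftrightarrow> ((x, y) \<in> E \<or> (y, x) \<in> E)))"

end

theory Submission
  imports Defs
begin

fun LL :: "nat \<Rightarrow> nat \<Rightarrow> nat" where
  "LL s 0 = 0"
| "LL s (Suc n) = s * (LL s n + 2) + n * s + 1"

lemma LL_bound: "n \<le> N \<Longrightarrow> s > 0 \<Longrightarrow> LL s n \<le> (4 * N * s) ^ n"
proof (induction n)
  case 0
  then show ?case by simp
next
  case (Suc n)
  define P where "P = (4 * N * s) ^ n"
  have IH: "LL s n \<le> P" using Suc by (simp add: P_def)
  have N1: "N \<ge> 1" using Suc by simp
  have Ppos: "P \<ge> 1" using N1 Suc.prems by (simp add: P_def)
  have "LL s (Suc n) = s * LL s n + (2 * s + n * s + 1)" by simp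
  also have "\<dots> \<le> s * P + 3 * N * s * P"
  proof -
    have a: "s * LL s n \<le> s * P" using IH by simp
    have "n * s + 1 \<le> N * s"
    proof -
      have "Suc n * s \<le> N * s" using Suc.prems(1) by (rule mult_le_mono1)
      then show ?thesis using Suc.prems(2) by simp
    qed
    then have "2 * s + n * s + 1 \<le> 2 * s + N * s" by simp
    also have "\<dots> \<le> 3 * N * s" using N1 by (simp add: mult_le_mono)
    also have "\<dots> \<le> 3 * N * s * P" using Ppos by simp
    finally show ?thesis using a by linarith
  qed
  also have "\<dots> \<le> 4 * N * s * P" using N1 Ppos
  proof -
    have "s * P \<le> N * s * P" using N1 by simp
    then show ?thesis by simp
  qed
  finally show ?case by (simp add: P_def)
qed

lemma isr:
  assumes G: "graph V adj" and noK: "\<not> contains_Kss V adj s" and sp: "s > 0"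
  shows "(\<forall>i<n. C i \<subseteq> V \<and> card (C i) \<ge> LL s n) \<Longrightarrow>
     \<exists>f. inj_on f {..<n} \<and> (\<forall>i<n. f i \<in> C i) \<and> (\<forall>i<n. \<forall>j<n. \<not> adj (f i) (f j))"
proof (induction n arbitrary: C)
  case 0
  then show ?case by simp
next
  case (Suc n)
  have finV: "finite V" and symm: "\<And>x y. adj x y \<Longrightarrow> adj y x" and irr: "\<And>x. \<not> adj x x"
    and inV: "\<And>x y. adj x y \<Longrightarrow> x \<in> V \<and> y \<in> V"
    using G unfolding graph_def by auto
  have CV: "\<And>i. i < Suc n \<Longrightarrow> C i \<subseteq> V" using Suc.prems by auto
  have Cfin: "\<And>i. i < Suc n \<Longrightarrow> finite (C i)" using CV finV finite_subset by blast
  have Ccard: "\<And>i. i < Suc n \<Longrightarrow> card (C i) \<ge> LL s (Suc n)" using Suc.prems by auto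
  define bad where "bad v \<longleftrightarrow> (\<exists>j<n. card (C (Suc j) - nbhd V adj v - {v}) < LL s n)" for v
  have "card (C 0) \<ge> n * s + 1" using Ccard[of 0] by simp
  then obtain X0 where X0: "X0 \<subseteq> C 0" "card X0 = n * s + 1"
    using obtain_subset_with_card_n by metis
  have finX0: "finite X0" using X0 Cfin[of 0] finite_subset by blast
  show ?case
  proof (cases "\<exists>v\<in>X0. \<not> bad v")
    case True
    then obtain v where v: "v \<in> X0" "\<not> bad v" by blast
    define C' where "C' j = C (Suc j) - nbhd V adj v - {v}" for j
    have "\<forall>i<n. C' i \<subseteq> V \<and> card (C' i) \<ge> LL s n"
      using v(2) CV unfolding bad_def C'_def by fastforce
    from Suc.IH[OF this] obtain f' where f': "inj_on f' {..<n}" "\<forall>i<n. f' i \<in> C' i"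
      "\<forall>i<n. \<forall>j<n. \<not> adj (f' i) (f' j)" by blast
    define f where "f i = (case i of 0 \<Rightarrow> v | Suc j \<Rightarrow> f' j)" for i
    have nv: "\<And>j. j < n \<Longrightarrow> f' j \<noteq> v \<and> \<not> adj v (f' j) \<and> \<not> adj (f' j) v"
    proof -
      fix j assume j: "j < n"
      have "f' j \<in> C' j" using f' j by blast
      then have m: "f' j \<in> C (Suc j)" "f' j \<notin> nbhd V adj v" "f' j \<noteq> v" unfolding C'_def by auto
      have "f' j \<in> V" using m(1) CV[of "Suc j"] j by auto
      then have "\<not> adj v (f' j)" using m(2) unfolding nbhd_def by auto
      then show "f' j \<noteq> v \<and> \<not> adj v (f' j) \<and> \<not> adj (f' j) v" using m(3) symm by blast
    qed
    have "inj_on f {..<Suc n}"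
    proof (rule inj_onI)
      fix x y assume x: "x \<in> {..<Suc n}" and y: "y \<in> {..<Suc n}" and e: "f x = f y"
      show "x = y"
      proof (cases x; cases y)
        fix x' y' assume "x = Suc x'" "y = Suc y'"
        then show "x = y" using e x y f'(1) unfolding f_def by (auto dest: inj_onD)
      next
        fix x' assume "x = Suc x'" "y = 0"
        then show "x = y" using e x nv[of x'] unfolding f_def by auto
      next
        fix y' assume "x = 0" "y = Suc y'"
        then show "x = y" using e y nv[of y'] unfolding f_def by auto
      qed simp
    qed
    moreover have "\<forall>i<Suc n. f i \<in> C i"
    proof (intro allI impI)
      fix i assume "i < Suc n"
      then show "f i \<in> C i" using v X0 f'(2) unfolding f_def C'_def by (cases i) auto
    qed
    moreover have "\<forall>i<Suc n. \<forall>j<Suc n. \<not> adj (f i) (f j)"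
    proof (intro allI impI)
      fix i j assume i: "i < Suc n" and j: "j < Suc n"
      show "\<not> adj (f i) (f j)"
        using i j f'(3) nv irr unfolding f_def by (cases i; cases j) auto
    qed
    ultimately show ?thesis by blast
  next
    case False
    then have allbad: "\<forall>v\<in>X0. bad v" by blast
    define J where "J v = (SOME j. j < n \<and> card (C (Suc j) - nbhd V adj v - {v}) < LL s n)" for v
    have J: "\<And>v. v \<in> X0 \<Longrightarrow> J v < n \<and> card (C (Suc (J v)) - nbhd V adj v - {v}) < LL s n"
      using allbad unfolding bad_def J_def by (metis (no_types, lifting) someI_ex)
    have "\<exists>j<n. card {v \<in> X0. J v = j} \<ge> s"
    proof (rule ccontr)
      assume "\<not> ?thesis"
      then have lt: "\<And>j. j < n \<Longrightarrow> card {v \<in> X0. J v = j} \<le> s - 1" by force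
      have "X0 = (\<Union>j<n. {v \<in> X0. J v = j})" using J by auto
      then have "card X0 \<le> (\<Sum>j<n. card {v \<in> X0. J v = j})"
        using card_UN_le[of "{..<n}" "\<lambda>j. {v \<in> X0. J v = j}"] by simp
      also have "\<dots> \<le> (\<Sum>j<n. s - 1)" using lt by (intro sum_mono) auto
      also have "\<dots> = n * (s - 1)" by simp
      finally have "n * s + 1 \<le> n * (s - 1)" using X0 by simp
      moreover have "n * (s - 1) \<le> n * s" by simp
      ultimately show False by linarith
    qed
    then obtain j where j: "j < n" "card {v \<in> X0. J v = j} \<ge> s" by blast
    obtain X where X: "X \<subseteq> {v \<in> X0. J v = j}" "card X = s"
      using obtain_subset_with_card_n[OF j(2)] by blast
    have "X \<subseteq> X0" using X(1) by blast
    then have finX: "finite X" using finX0 finite_subset by blast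
    define D where "D = C (Suc j)"
    have Dfin: "finite D" using Cfin j unfolding D_def by simp
    define Y0 where "Y0 = {y \<in> D. \<forall>v\<in>X. adj v y}"
    have sub: "D - Y0 \<subseteq> (\<Union>v\<in>X. D - nbhd V adj v - {v}) \<union> X"
      unfolding Y0_def nbhd_def by auto
    define U where "U = (\<Union>v\<in>X. D - nbhd V adj v - {v})"
    have finU: "finite U" unfolding U_def using finX Dfin by blast
    have c1: "card (D - Y0) \<le> card (U \<union> X)"
      by (rule card_mono) (use finU finX sub in \<open>auto simp: U_def\<close>)
    have c2: "card (U \<union> X) \<le> card U + card X" by (rule card_Un_le)
    have c3: "card U \<le> (\<Sum>v\<in>X. card (D - nbhd V adj v - {v}))"
      unfolding U_def by (rule card_UN_le[OF finX])
    have c4: "(\<Sum>v\<in>X. card (D - nbhd V adj v - {v})) \<le> (\<Sum>v\<in>X. LL s n)"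
    proof (rule sum_mono)
      fix v assume vX: "v \<in> X"
      then have "v \<in> X0" "J v = j" using X by auto
      then show "card (D - nbhd V adj v - {v}) \<le> LL s n" using J[of v] unfolding D_def by simp
    qed
    have c5: "(\<Sum>v\<in>X. LL s n) = s * LL s n" using X by simp
    have dy: "card (D - Y0) \<le> s * LL s n + s" using c1 c2 c3 c4 c5 X(2) by linarith
    have cd: "card D \<ge> s * LL s n + 2 * s + n * s + 1" using Ccard[of "Suc j"] j unfolding D_def
      by (simp add: algebra_simps)
    have Y0D: "Y0 \<subseteq> D" unfolding Y0_def by blast
    have cdiff: "card (D - Y0) = card D - card Y0"
      by (rule card_Diff_subset) (use Y0D Dfin finite_subset in auto)
    have "card Y0 \<le> card D" using Y0D Dfin by (simp add: card_mono)
    then have "card Y0 \<ge> s" using dy cd cdiff by linarith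
    then obtain Y where Y: "Y \<subseteq> Y0" "card Y = s" using obtain_subset_with_card_n by metis
    have "contains_Kss V adj s"
      unfolding contains_Kss_def
    proof (intro exI conjI)
      show "X \<subseteq> V" using X X0 CV[of 0] by auto
      show "Y \<subseteq> V" using Y CV[of "Suc j"] j unfolding Y0_def D_def by auto
      show "X \<inter> Y = {}" using Y irr unfolding Y0_def by auto
      show "card X = s" "card Y = s" using X Y by auto
      show "\<forall>x\<in>X. \<forall>y\<in>Y. adj x y" using Y unfolding Y0_def by auto
    qed
    then show ?thesis using noK by blast
  qed
qed

theorem lemma2p3:
  fixes V :: "'v set" and adj :: "'v \<Rightarrow> 'v \<Rightarrow> bool"
    and A B :: "'h set" and E :: "('h \<times> 'h) set" and k s :: nat
  assumes G: "graph V adj"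
    and H_fin: "finite A" "finite B"
    and H_bip: "A \<inter> B = {}" "E \<subseteq> A \<times> B"
    and H_deg: "\<forall>v\<in>B. card {u \<in> A. (u, v) \<in> E} \<le> k"
    and s_pos: "s > 0"
    and noKss: "\<not> contains_Kss V adj s"
    and rich_set: "\<exists>S. card S = card A \<and> independent adj S \<and> rich V adj k (card B) s S"
  shows "induced_copy V adj (A \<union> B) E"
proof -
  have finV: "finite V" and symm: "\<And>x y. adj x y \<Longrightarrow> adj y x" and irr: "\<And>x. \<not> adj x x"
    and inV: "\<And>x y. adj x y \<Longrightarrow> x \<in> V \<and> y \<in> V"
    using G unfolding graph_def by auto
  obtain S where S: "card S = card A" "independent adj S" "rich V adj k (card B) s S"
    using rich_set by blast
  have SV: "S \<subseteq> V" using S(3) unfolding rich_def by blast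
  have finS: "finite S" using SV finV finite_subset by blast
  obtain g where g: "bij_betw g A S" using finite_same_card_bij[OF H_fin(1) finS] S(1) by metis
  obtain e where e: "bij_betw e {0..<card B} B" using ex_bij_betw_nat_finite[OF H_fin(2)] by blast
  define b where "b = card B"
  define T where "T i = g ` {u \<in> A. (u, e i) \<in> E}" for i
  define C where "C i = {v \<in> V - S. nbhd V adj v \<inter> S = T i}" for i
  have "\<forall>i<b. C i \<subseteq> V \<and> card (C i) \<ge> LL s b"
  proof (intro allI impI conjI)
    fix i assume i: "i < b"
    show "C i \<subseteq> V" unfolding C_def by auto
    have TS: "T i \<subseteq> S" using g unfolding T_def bij_betw_def by auto
    have "e i \<in> B" using e i unfolding b_def bij_betw_def by auto
    have "card (T i) \<le> card {u \<in> A. (u, e i) \<in> E}" unfolding T_def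
      by (rule card_image_le) (use H_fin(1) in simp)
    also have "\<dots> \<le> k" using H_deg \<open>e i \<in> B\<close> by blast
    finally have Tk: "card (T i) \<le> k" .
    have R: "\<forall>T. T \<subseteq> S \<and> card T \<le> k \<longrightarrow> card {v \<in> V - S. nbhd V adj v \<inter> S = T} \<ge> (4 * b * s) ^ b"
      using S(3) unfolding rich_def b_def by blast
    have "card (C i) \<ge> (4 * b * s) ^ b" unfolding C_def using R TS Tk by blast
    moreover have "LL s b \<le> (4 * b * s) ^ b" using LL_bound s_pos by blast
    ultimately show "card (C i) \<ge> LL s b" by linarith
  qed
  from isr[OF G noKss s_pos this] obtain f where f: "inj_on f {..<b}" "\<forall>i<b. f i \<in> C i"
    "\<forall>i<b. \<forall>j<b. \<not> adj (f i) (f j)" by blast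
  define \<iota> where "\<iota> = the_inv_into {..<b} e"
  have e': "bij_betw e {..<b} B" using e unfolding b_def by (simp add: atLeast0LessThan)
  have einj: "inj_on e {..<b}" and eim: "e ` {..<b} = B" using e' unfolding bij_betw_def by auto
  have iota: "\<And>y. y \<in> B \<Longrightarrow> \<iota> y < b \<and> e (\<iota> y) = y"
  proof -
    fix y assume y: "y \<in> B"
    then have y': "y \<in> e ` {..<b}" using eim by simp
    have "\<iota> y \<in> {..<b}" unfolding \<iota>_def by (rule the_inv_into_into[OF einj y' subset_refl])
    moreover have "e (\<iota> y) = y" unfolding \<iota>_def by (rule f_the_inv_into_f[OF einj y'])
    ultimately show "\<iota> y < b \<and> e (\<iota> y) = y" by simp
  qed
  have iota_inj: "inj_on \<iota> B"
    using inj_on_the_inv_into[OF einj] eim unfolding \<iota>_def by simp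
  define F where "F x = (if x \<in> A then g x else f (\<iota> x))" for x
  have gS: "\<And>x. x \<in> A \<Longrightarrow> g x \<in> S" using g unfolding bij_betw_def by auto
  have ginj: "inj_on g A" using g unfolding bij_betw_def by auto
  have fB: "\<And>y. y \<in> B \<Longrightarrow> F y \<in> C (\<iota> y) \<and> y \<notin> A"
    using iota f(2) H_bip(1) unfolding F_def by auto
  have cross: "\<And>x y. x \<in> A \<Longrightarrow> y \<in> B \<Longrightarrow> adj (F x) (F y) \<longleftrightarrow> (x, y) \<in> E"
  proof -
    fix x y assume x: "x \<in> A" and y: "y \<in> B"
    have Fy: "F y \<in> C (\<iota> y)" using fB y by blast
    have Fx: "F x = g x" using x unfolding F_def by simp
    have "adj (F x) (F y) \<longleftrightarrow> adj (F y) (g x)" unfolding Fx using symm[of "g x" "F y"] symm[of "F y" "g x"] by blast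
    also have "\<dots> \<longleftrightarrow> g x \<in> nbhd V adj (F y) \<inter> S" using gS[OF x] SV unfolding nbhd_def by auto
    also have "\<dots> \<longleftrightarrow> g x \<in> T (\<iota> y)" using Fy unfolding C_def by auto
    also have "\<dots> \<longleftrightarrow> x \<in> {u \<in> A. (u, e (\<iota> y)) \<in> E}" unfolding T_def
      by (rule inj_on_image_mem_iff[OF ginj x]) blast
    also have "\<dots> \<longleftrightarrow> (x, y) \<in> E" using iota[OF y] x by simp
    finally show "adj (F x) (F y) \<longleftrightarrow> (x, y) \<in> E" .
  qed
  have CnS: "\<And>i. C i \<inter> S = {}" unfolding C_def by auto
  show ?thesis unfolding induced_copy_def
  proof (intro exI conjI)
    show "inj_on F (A \<union> B)"
    proof (rule inj_onI)
      fix x y assume x: "x \<in> A \<union> B" and y: "y \<in> A \<union> B" and eq: "F x = F y"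
      show "x = y"
      proof (cases "x \<in> A"; cases "y \<in> A")
        assume a: "x \<in> A" "y \<in> A"
        then have "g x = g y" using eq unfolding F_def by simp
        then show ?thesis using inj_onD[OF ginj _ a] by blast
      next
        assume a: "x \<in> A" "y \<notin> A"
        have "F x \<in> S" using gS a unfolding F_def by simp
        moreover have "F y \<in> C (\<iota> y)" using fB y a by blast
        ultimately have "F x \<in> C (\<iota> y) \<inter> S" using eq by simp
        then show ?thesis using CnS[of "\<iota> y"] by simp
      next
        assume a: "x \<notin> A" "y \<in> A"
        have "F y \<in> S" using gS a unfolding F_def by simp
        moreover have "F x \<in> C (\<iota> x)" using fB x a by blast
        ultimately have "F y \<in> C (\<iota> x) \<inter> S" using eq by simp
        then show ?thesis using CnS[of "\<iota> x"] by simp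
      next
        assume a: "x \<notin> A" "y \<notin> A"
        then have xy: "x \<in> B" "y \<in> B" using x y by auto
        then have "f (\<iota> x) = f (\<iota> y)" using eq a unfolding F_def by simp
        moreover have "\<iota> x \<in> {..<b}" "\<iota> y \<in> {..<b}" using iota xy by auto
        ultimately have "\<iota> x = \<iota> y" using inj_onD[OF f(1)] by blast
        then show ?thesis using inj_onD[OF iota_inj _ xy] by blast
      qed
    qed
    show "F ` (A \<union> B) \<subseteq> V"
    proof
      fix z assume "z \<in> F ` (A \<union> B)"
      then obtain x where x: "x \<in> A \<union> B" "z = F x" by blast
      show "z \<in> V"
      proof (cases "x \<in> A")
        case True
        then show ?thesis using x gS SV unfolding F_def by auto
      next
        case False
        then have "x \<in> B" using x by auto
        then have "F x \<in> C (\<iota> x)" using fB by blast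
        then show ?thesis using x unfolding C_def by auto
      qed
    qed
    show "\<forall>x\<in>A \<union> B. \<forall>y\<in>A \<union> B. adj (F x) (F y) \<longleftrightarrow> ((x, y) \<in> E \<or> (y, x) \<in> E)"
    proof (intro ballI)
      fix x y assume x: "x \<in> A \<union> B" and y: "y \<in> A \<union> B"
      show "adj (F x) (F y) \<longleftrightarrow> ((x, y) \<in> E \<or> (y, x) \<in> E)"
      proof (cases "x \<in> A"; cases "y \<in> A")
        assume a: "x \<in> A" "y \<in> A"
        then have "\<not> adj (F x) (F y)" using S(2) gS unfolding independent_def F_def by auto
        moreover have "(x, y) \<notin> E" "(y, x) \<notin> E" using a H_bip by auto
        ultimately show ?thesis by blast
      next
        assume a: "x \<in> A" "y \<notin> A"
        then have "y \<in> B" using y by auto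
        then show ?thesis using cross[OF a(1)] a H_bip(2) by auto
      next
        assume a: "x \<notin> A" "y \<in> A"
        then have xB: "x \<in> B" using x by auto
        have "adj (F x) (F y) \<longleftrightarrow> adj (F y) (F x)" using symm[of "F x" "F y"] symm[of "F y" "F x"] by blast
        then show ?thesis using cross[OF a(2) xB] a H_bip(2) by auto
      next
        assume a: "x \<notin> A" "y \<notin> A"
        then have xy: "x \<in> B" "y \<in> B" using x y by auto
        have "\<not> adj (F x) (F y)" using f(3) iota xy a unfolding F_def by auto
        moreover have "(x, y) \<notin> E" "(y, x) \<notin> E" using a H_bip by auto
        ultimately show ?thesis by blast
      qed
    qed
  qed
qed

end
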